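(* For $0<q<1$, $$\log\tilde\Gamma(q)=-\log q+\tilde\gamma_0\, q+\sum_{k=2}^\infty\frac{(-1)^{k-1}\zeta_E(k)}{k}\,q^k,$$ where $\tilde\Gamma(q)=\frac1q e^{\tilde\gamma_0 q}\prod_{k=1}^\infty\left(e^{-\frac qk}\left(1+\frac qk\right)\right)^{(-1)^{k+1}}$.
   Context: $\zeta_E(z)=\sum_{n=1}^\infty(-1)^{n+1}n^{-z}$ (alternating zeta function, continued analytically in $z$). For $q>0$, $\zeta_E(z,q)=\sum_{n=0}^\infty (-1)^n (n+q)^{-z}$ for $\mathrm{Re}(z)>0$, extended analytically; the modified Stieltjes constants $\tilde\gamma_k(q)$ are defined by $\zeta_E(z,q)=\sum_{k\ge0}\frac{(-1)^k\tilde\gamma_k(q)}{k!}(z-1)^k$, and $\tilde\gamma_0:=\tilde\gamma_0(1)=\zeta_E(1)$. The modified gamma function $\tilde\Gamma$ is the function given by the product above for $q>0$; it satisfies $\frac{d}{dq}\log\tilde\Gamma(q)=-\zeta_E(1,q)$. *)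

theory Defs
  imports "HOL-Analysis.Analysis"
begin

text \<open>Alternating zeta function on real arguments s > 0, where the defining series
  sum_{n>=1} (-1)^(n+1) n^(-s) converges (conditionally for 0 < s <= 1); this
  agrees there with its analytic continuation.\<close>
definition zetaE :: "real \<Rightarrow> real" where
  "zetaE s = (\<Sum>n. (-1) ^ n / (real (Suc n)) powr s)"

definition gamma0E :: real where
  "gamma0E = zetaE 1"

definition GammaE :: "real \<Rightarrow> real" where
  "GammaE q = (1 / q) * exp (gamma0E * q) *
     (\<Prod>k. (exp (- q / real (Suc k)) * (1 + q / real (Suc k))) powr ((-1) ^ (Suc k + 1)))"

end

theory Submission
  imports Defs
begin

lemma sums_to_has_sum:
  fixes g :: "nat \<Rightarrow> real"
  assumes "g summable_on UNIV" "g sums s"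
  shows "(g has_sum s) UNIV"
proof -
  have "(g has_sum infsum g UNIV) UNIV" using assms(1) by (simp add: summable_iff_has_sum_infsum)
  then have "g sums infsum g UNIV" by (rule has_sum_imp_sums)
  then have "infsum g UNIV = s" using assms(2) sums_unique2 by blast
  with \<open>(g has_sum infsum g UNIV) UNIV\<close> show ?thesis by simp
qed

lemma nonneg_summable_on:
  fixes g :: "nat \<Rightarrow> real"
  assumes "summable g" "\<And>n. g n \<ge> 0"
  shows "(\<lambda>n. norm (g n)) summable_on UNIV"
  using summable_nonneg_imp_summable_on[OF assms] assms(2) by simp

lemma dl: "(a::real) \<ge> 0 \<Longrightarrow> b \<ge> 1 \<Longrightarrow> a / b \<le> a"
  by (simp add: divide_le_eq mult_le_cancel_left1)

theorem corollary3p13: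
  fixes q :: real
  assumes "0 < q" and "q < 1"
  shows "(\<lambda>n. (-1) ^ (n + 1) * zetaE (real (n + 2)) / real (n + 2) * q ^ (n + 2))
           sums (ln (GammaE q) + ln q - gamma0E * q)"
proof -
  define x where "x k = q / real (Suc k)" for k
  have x0: "0 < x k" for k using assms by (simp add: x_def)
  have x1: "x k < 1" for k using assms by (simp add: x_def field_simps)
  have xq: "x k \<le> q" for k using assms by (simp add: x_def field_simps)
  define f where "f p = (-1) ^ fst p * ((-1) ^ (snd p + 1) * x (fst p) ^ (snd p + 2) / real (snd p + 2))"
    for p :: "nat \<times> nat"
  define g where "g p = q ^ (snd p + 2) * (1 / real (Suc (fst p)) ^ 2)" for p :: "nat \<times> nat"
  define C where "C = infsum (\<lambda>n. q ^ (n + 2)) UNIV"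
  have geo: "summable (\<lambda>n. q ^ (n + 2))"
    using assms by (simp add: power_add summable_mult2 summable_geometric)
  have inv2: "summable (\<lambda>k. 1 / real (Suc k) ^ 2)"
  proof -
    have "summable (\<lambda>k. inverse (real k ^ 2))" by (rule inverse_power_summable) auto
    then have "summable (\<lambda>k. inverse (real (Suc k) ^ 2))" by (subst summable_Suc_iff)
    then show ?thesis by (simp add: divide_inverse)
  qed
  have gabs: "(\<lambda>p. norm (g p)) summable_on UNIV \<times> UNIV"
  proof (rule Infinite_Sum.abs_summable_on_Sigma_iff[THEN iffD2], intro conjI ballI)
    fix k :: nat
    show "(\<lambda>n. norm (g (k, n))) summable_on UNIV"
      unfolding g_def using assms
      by (intro nonneg_summable_on summable_mult2 geo) auto
  next
    have "infsum (\<lambda>n. norm (g (k, n))) UNIV = C * (1 / real (Suc k) ^ 2)" for k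
    proof -
      have "(\<lambda>n. norm (g (k, n))) = (\<lambda>n. q ^ (n + 2) * (1 / real (Suc k) ^ 2))"
        unfolding g_def using assms by (auto simp: abs_mult)
      then show ?thesis unfolding C_def by (simp only: infsum_cmult_left')
    qed
    moreover have "C \<ge> 0" unfolding C_def using assms by (intro infsum_nonneg) auto
    ultimately show "(\<lambda>k. norm (infsum (\<lambda>n. norm (g (k, n))) UNIV)) summable_on UNIV"
      by (simp only:) (intro nonneg_summable_on summable_mult inv2, auto)
  qed
  have fabs: "(\<lambda>p. norm (f p)) summable_on UNIV \<times> UNIV"
  proof (rule Infinite_Sum.abs_summable_on_comparison_test[OF gabs])
    fix p :: "nat \<times> nat"
    obtain k n where p: "p = (k, n)" by force
    have "norm (f p) = x k ^ (n + 2) / real (n + 2)"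
      using x0[of k] by (simp add: f_def p abs_mult power_abs)
    also have "\<dots> \<le> x k ^ (n + 2)" using x0[of k]
      by (intro dl) auto
    also have "\<dots> = q ^ (n + 2) / real (Suc k) ^ (n + 2)" by (simp add: x_def power_divide)
    also have "\<dots> \<le> q ^ (n + 2) / real (Suc k) ^ 2"
      using assms by (intro divide_left_mono power_increasing) auto
    also have "\<dots> = norm (g p)" using assms by (simp add: g_def p)
    finally show "norm (f p) \<le> norm (g p)" .
  qed
  then have fsum: "f summable_on UNIV \<times> UNIV" using summable_on_iff_abs_summable_on_real by blast
  then obtain S where S: "(f has_sum S) (UNIV \<times> UNIV)" using summable_on_def by blast

  have fs2: "(\<lambda>(k, n). f (k, n)) summable_on UNIV \<times> UNIV" using fsum by simp
  have fsw: "(\<lambda>(n, k). f (k, n)) summable_on UNIV \<times> UNIV"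
    using fsum summable_on_swap[of f] by blast
  have Sw: "((\<lambda>(n, k). f (k, n)) has_sum S) (UNIV \<times> UNIV)"
    using S has_sum_swap[of f] by blast
  define G where "G k = (-1) ^ k * (ln (1 + x k) - x k)" for k
  define H where "H n = (-1) ^ (n + 1) * zetaE (real (n + 2)) / real (n + 2) * q ^ (n + 2)" for n
  have sliceK: "((\<lambda>n. f (k, n)) has_sum G k) UNIV" for k
  proof (rule sums_to_has_sum)
    show "(\<lambda>n. f (k, n)) summable_on UNIV"
      using summable_on_SigmaD1[of "\<lambda>k n. f (k, n)", OF fs2] by simp
    have "\<bar>x k\<bar> < 1" using x0[of k] x1[of k] by simp
    from ln_series'[OF this] have
      "(\<lambda>m. - ((- x k) ^ m) / real m) sums ln (1 + x k)" .
    then have "(\<lambda>n. - ((- x k) ^ (n + 2)) / real (n + 2)) sums (ln (1 + x k) - x k)"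
      by (subst sums_iff_shift) (simp add: eval_nat_numeral)
    then have "(\<lambda>n. (-1) ^ k * (- ((- x k) ^ (n + 2)) / real (n + 2))) sums ((-1) ^ k * (ln (1 + x k) - x k))"
      by (rule sums_mult)
    moreover have "(-1) ^ k * (- ((- x k) ^ (n + 2)) / real (n + 2)) = f (k, n)" for n
      by (simp add: f_def power_minus[of "x k"] power_add)
    ultimately show "(\<lambda>n. f (k, n)) sums G k" by (simp add: G_def)
  qed
  have sliceN: "((\<lambda>k. f (k, n)) has_sum H n) UNIV" for n
  proof (rule sums_to_has_sum)
    show "(\<lambda>k. f (k, n)) summable_on UNIV"
      using summable_on_SigmaD1[of "\<lambda>n k. f (k, n)", OF fsw] by simp
    define a where "a k = (-1) ^ k / real (Suc k) ^ (n + 2)" for k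
    have "summable (\<lambda>k. norm (a k))"
    proof (rule summable_comparison_test[OF _ inv2])
      show "\<exists>N. \<forall>k\<ge>N. norm (norm (a k)) \<le> 1 / real (Suc k) ^ 2"
      proof (intro exI[of _ 0] allI impI)
        fix k :: nat
        have "norm (norm (a k)) = 1 / real (Suc k) ^ (n + 2)" by (simp add: a_def power_abs)
        also have "\<dots> \<le> 1 / real (Suc k) ^ 2"
          by (intro divide_left_mono power_increasing) auto
        finally show "norm (norm (a k)) \<le> 1 / real (Suc k) ^ 2" .
      qed
    qed
    then have "summable a" by (rule summable_norm_cancel)
    moreover have "zetaE (real (n + 2)) = suminf a"
    proof -
      have "real (Suc k) powr real (n + 2) = real (Suc k) ^ (n + 2)" for k
        by (rule powr_realpow) simp
      then show ?thesis unfolding zetaE_def a_def by (simp only:)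
    qed
    ultimately have "a sums zetaE (real (n + 2))" by (simp add: summable_sums)
    then have "(\<lambda>k. ((-1) ^ (n + 1) * q ^ (n + 2) / real (n + 2)) * a k) sums
        (((-1) ^ (n + 1) * q ^ (n + 2) / real (n + 2)) * zetaE (real (n + 2)))"
      by (rule sums_mult)
    moreover have "((-1) ^ (n + 1) * q ^ (n + 2) / real (n + 2)) * a k = f (k, n)" for k
      by (simp add: f_def a_def x_def power_divide mult_ac)
    ultimately show "(\<lambda>k. f (k, n)) sums H n" by (simp add: H_def mult_ac)
  qed
  have GS: "(G has_sum S) UNIV"
    by (rule has_sum_SigmaD[OF S]) (use sliceK in simp)
  have HS: "(H has_sum S) UNIV"
    by (rule has_sum_SigmaD[OF Sw]) (use sliceN in simp)
  have Gs: "G sums S" using GS by (rule has_sum_imp_sums)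
  have Hs: "H sums S" using HS by (rule has_sum_imp_sums)
  have prodterm: "(exp (- q / real (Suc k)) * (1 + q / real (Suc k))) powr ((-1) ^ (Suc k + 1))
      = exp (G k)" for k
  proof -
    have pos: "exp (- x k) * (1 + x k) > 0" using x0[of k] by simp
    have "ln (exp (- x k) * (1 + x k)) = - x k + ln (1 + x k)"
      using x0[of k] by (simp add: ln_mult)
    moreover have "q / real (Suc k) = x k" by (simp add: x_def)
    moreover have "(-1::real) ^ (Suc k + 1) = (-1) ^ k" by simp
    ultimately have "(exp (- q / real (Suc k)) * (1 + q / real (Suc k))) powr ((-1) ^ (Suc k + 1))
        = exp ((-1) ^ k * (- x k + ln (1 + x k)))"
      using pos x0[of k] by (simp add: powr_def)
    then show ?thesis by (simp add: G_def)
  qed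
  have "(\<Prod>k. (exp (- q / real (Suc k)) * (1 + q / real (Suc k))) powr ((-1) ^ (Suc k + 1)))
      = (\<Prod>k. exp (G k))" by (simp only: prodterm)
  also have "\<dots> = exp S"
    using prodinf_exp[of G] Gs by (simp add: sums_unique[symmetric] sums_summable)
  finally have "(\<Prod>k. (exp (- q / real (Suc k)) * (1 + q / real (Suc k))) powr ((-1) ^ (Suc k + 1)))
      = exp S" .
  then have "GammaE q = (1 / q) * exp (gamma0E * q) * exp S" by (simp add: GammaE_def)
  then have "ln (GammaE q) = - ln q + gamma0E * q + S"
    using assms by (simp add: ln_mult ln_div)
  then have "S = ln (GammaE q) + ln q - gamma0E * q" by simp
  then show ?thesis using Hs unfolding H_def[abs_def] by simp
qed

end
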